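(* Let $\alpha>0$, $\beta\ge0$, $\lambda\in[0,1]$ and $z\notin\operatorname{argmin}\phi$. For each $\tau\in(0,\tau_2)\cap(0,T^\lambda(z)]$ and each $t\in[\tau,T^\lambda(z)]$, $$\phi(x_z(t))-\phi^*\le\left(1-\Big[\frac{\alpha(1-\lambda)}{2}+\frac{\beta\mu\tau}{3}\Big]\frac{2\mu\tau^2\Psi(\tau)}{(\alpha+1)^2}\right)\big(\phi(z)-\phi^*\big),$$ where $\Psi(t)=\big(2-\frac{1}{H(t)}\big)^2$.
   Context: Let $\phi:\mathbb{R}^n\to\mathbb{R}$ be twice continuously differentiable, $\mu$-strongly convex ($\mu>0$), with $L$-Lipschitz gradient and minimum value $\phi^*$. For $z\in\mathbb{R}^n$, $x_z$ is the unique $C^1([0,\infty))\cap C^2((0,\infty))$ solution of $\ddot x(t)+\frac{\alpha}{t}\dot x(t)+\beta\nabla^2\phi(x(t))\dot x(t)+\nabla\phi(x(t))=0$ ($t>0$), $x(0)=z$, $\dot x(0)=0$. For $\lambda\in[0,1]$: $\varphi_{z,\lambda}(t)=\frac12\frac{d}{dt}\|\dot x_z(t)\|^2+\lambda\frac{\alpha}{t}\|\dot x_z(t)\|^2$ and $T^\lambda(z)=\inf\{t>0:\varphi_{z,\lambda}(t)\le0\}$. $H(t)=1-\frac{\beta Lt}{\alpha+2}-\frac{Lt^2}{2(\alpha+3)}$ and $\tau_2=-\frac{\alpha+3}{\alpha+2}\beta+\sqrt{\left(\frac{\alpha+3}{\alpha+2}\right)^2\beta^2+\frac{\alpha+3}{L}}$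 (so $H(\tau_2)=\frac12$). *)

theory Defs
  imports "HOL-Analysis.Analysis"
begin

definition strongly_convex :: "real \<Rightarrow> ('a::real_inner \<Rightarrow> real) \<Rightarrow> bool" where
  "strongly_convex mu f \<longleftrightarrow> convex_on UNIV (\<lambda>x. f x - mu / 2 * (norm x)\<^sup>2)"

definition H_fun :: "real \<Rightarrow> real \<Rightarrow> real \<Rightarrow> real \<Rightarrow> real" where
  "H_fun \<alpha> \<beta> L t = 1 - \<beta> * L * t / (\<alpha> + 2) - L * t\<^sup>2 / (2 * (\<alpha> + 3))"

definition tau2 :: "real \<Rightarrow> real \<Rightarrow> real \<Rightarrow> real" where
  "tau2 \<alpha> \<beta> L = - (\<alpha> + 3) / (\<alpha> + 2) * \<beta>
     + sqrt (((\<alpha> + 3) / (\<alpha> + 2))\<^sup>2 * \<beta>\<^sup>2 + (\<alpha> + 3) / L)"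

definition Psi_fun :: "real \<Rightarrow> real \<Rightarrow> real \<Rightarrow> real \<Rightarrow> real" where
  "Psi_fun \<alpha> \<beta> L t = (2 - 1 / H_fun \<alpha> \<beta> L t)\<^sup>2"

text \<open>varphi_{z,lambda}(t) = (1/2) d/dt |xdot|^2 + lambda alpha/t |xdot|^2, written with
  the velocity v and acceleration a of the trajectory: (1/2) d/dt |v|^2 = v . a.\<close>
definition varphi :: "real \<Rightarrow> real \<Rightarrow> (real \<Rightarrow> 'a::real_inner) \<Rightarrow> (real \<Rightarrow> 'a) \<Rightarrow> real \<Rightarrow> real" where
  "varphi \<alpha> lam v a t = v t \<bullet> a t + lam * \<alpha> / t * (norm (v t))\<^sup>2"

text \<open>T^lambda(z) = inf {t > 0. varphi(t) <= 0}, as an extended real (= infinity if the set is empty).\<close>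
definition T_lambda :: "real \<Rightarrow> real \<Rightarrow> (real \<Rightarrow> 'a::real_inner) \<Rightarrow> (real \<Rightarrow> 'a) \<Rightarrow> ereal" where
  "T_lambda \<alpha> lam v a = Inf (ereal ` {t. t > 0 \<and> varphi \<alpha> lam v a t \<le> 0})"

end

theory Submission
  imports Defs
begin


lemma line_deriv:
  fixes grad :: "'a::real_normed_vector \<Rightarrow> 'a"
  assumes "(grad has_derivative blinfun_apply D) (at y)"
  shows "((\<lambda>e. grad (y + e *\<^sub>R h)) has_vector_derivative blinfun_apply D h) (at 0)"
proof -
  have "((\<lambda>e::real. y + e *\<^sub>R h) has_derivative (\<lambda>e. e *\<^sub>R h)) (at 0)"
    by (auto intro!: derivative_eq_intros)
  moreover have "(grad has_derivative blinfun_apply D) (at ((\<lambda>e::real. y + e *\<^sub>R h) 0))"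
    using assms by simp
  ultimately have "((\<lambda>e. grad (y + e *\<^sub>R h)) has_derivative (\<lambda>e. blinfun_apply D (e *\<^sub>R h))) (at 0)"
    using has_derivative_compose[of "\<lambda>e::real. y + e *\<^sub>R h" "\<lambda>e. e *\<^sub>R h" 0 UNIV grad "blinfun_apply D"]
    by (simp add: o_def)
  then show ?thesis
    by (simp add: has_vector_derivative_def blinfun.scaleR_right)
qed

lemma inner_line_deriv:
  fixes grad :: "'a::real_inner \<Rightarrow> 'a"
  assumes "(grad has_derivative blinfun_apply D) (at y)"
  shows "((\<lambda>e. u \<bullet> grad (y + e *\<^sub>R h)) has_real_derivative u \<bullet> blinfun_apply D h) (at 0)"
proof -
  have "((\<lambda>e. grad (y + e *\<^sub>R h)) has_derivative (\<lambda>e. e *\<^sub>R blinfun_apply D h)) (at 0)"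
    using line_deriv[OF assms, of h] by (simp add: has_vector_derivative_def)
  from has_derivative_inner_right[OF this, of u]
  have "((\<lambda>e. u \<bullet> grad (y + e *\<^sub>R h)) has_derivative (\<lambda>e. e * (u \<bullet> blinfun_apply D h))) (at 0)"
    by (simp add: inner_scaleR_right)
  moreover have "(\<lambda>e. e * (u \<bullet> blinfun_apply D h)) = (*) (u \<bullet> blinfun_apply D h)"
    by (auto simp: fun_eq_iff)
  ultimately show ?thesis by (simp add: has_field_derivative_def)
qed

lemma hess_norm:
  fixes grad :: "'a::real_inner \<Rightarrow> 'a"
  assumes "(grad has_derivative blinfun_apply D) (at y)"
    and lip: "L-lipschitz_on UNIV grad"
  shows "norm (blinfun_apply D h) \<le> L * norm h"
proof -
  define u where "u = blinfun_apply D h"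
  define q where "q e = u \<bullet> grad (y + e *\<^sub>R h) - u \<bullet> grad y - e * (L * norm h * norm u)" for e
  have dq: "(q has_real_derivative u \<bullet> u - L * norm h * norm u) (at 0)"
    unfolding q_def u_def
    by (rule derivative_eq_intros inner_line_deriv[OF assms(1)] | simp)+
  have qle: "q e \<le> 0" if "e > 0" for e
  proof -
    have "u \<bullet> (grad (y + e *\<^sub>R h) - grad y) \<le> norm u * norm (grad (y + e *\<^sub>R h) - grad y)"
      by (rule norm_cauchy_schwarz)
    also have "norm (grad (y + e *\<^sub>R h) - grad y) \<le> L * dist (y + e *\<^sub>R h) y"
      using lip by (metis dist_norm lipschitz_onD UNIV_I)
    also have "dist (y + e *\<^sub>R h) y = e * norm h" using that by (simp add: dist_norm)
    finally have "u \<bullet> (grad (y + e *\<^sub>R h) - grad y) \<le> norm u * (L * (e * norm h))"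
      by (simp add: mult_left_mono)
    then show ?thesis unfolding q_def by (simp add: inner_diff_right algebra_simps)
  qed
  have "u \<bullet> u \<le> L * norm h * norm u"
  proof (rule ccontr)
    assume "\<not> ?thesis"
    then obtain d where "d > 0" "\<forall>e>0. e < d \<longrightarrow> q 0 < q (0 + e)"
      using DERIV_pos_inc_right[OF dq] by force
    then have "q 0 < q (d/2)" by auto
    moreover have "q 0 = 0" by (simp add: q_def)
    ultimately show False using qle[of "d/2"] \<open>d>0\<close> by simp
  qed
  then have "norm u * norm u \<le> (L * norm h) * norm u" by (simp add: dot_square_norm power2_eq_square)
  then show ?thesis unfolding u_def[symmetric]
    using lipschitz_on_nonneg[OF lip] by (cases "norm u = 0") (auto simp: mult_le_cancel_right)
qed

lemma line_deriv_scalar: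
  fixes f :: "'a::real_inner \<Rightarrow> real"
  assumes "(f has_derivative (\<lambda>h. G \<bullet> h)) (at y)"
  shows "((\<lambda>e. f (y + e *\<^sub>R d)) has_real_derivative G \<bullet> d) (at 0)"
proof -
  have "((\<lambda>e::real. y + e *\<^sub>R d) has_derivative (\<lambda>e. e *\<^sub>R d)) (at 0)"
    by (auto intro!: derivative_eq_intros)
  moreover have "(f has_derivative (\<lambda>h. G \<bullet> h)) (at ((\<lambda>e::real. y + e *\<^sub>R d) 0))"
    using assms by simp
  ultimately have "((\<lambda>e. f (y + e *\<^sub>R d)) has_derivative (\<lambda>e. G \<bullet> (e *\<^sub>R d))) (at 0)"
    using has_derivative_compose[of "\<lambda>e::real. y + e *\<^sub>R d" "\<lambda>e. e *\<^sub>R d" 0 UNIV f "\<lambda>h. G \<bullet> h"]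
    by (simp add: o_def)
  moreover have "(\<lambda>e. G \<bullet> (e *\<^sub>R d)) = (*) (G \<bullet> d)"
    by (auto simp: fun_eq_iff)
  ultimately show ?thesis by (simp add: has_field_derivative_def)
qed

lemma sc_first_order:
  fixes \<phi> :: "'a::real_inner \<Rightarrow> real"
  assumes grad: "\<And>y. (\<phi> has_derivative (\<lambda>h. grad y \<bullet> h)) (at y)"
    and strong: "strongly_convex \<mu> \<phi>"
  shows "\<phi> y \<ge> \<phi> x + grad x \<bullet> (y - x) + \<mu> / 2 * (norm (y - x))\<^sup>2"
proof -
  define d where "d = y - x"
  define \<psi> where "\<psi> w = \<phi> w - \<mu> / 2 * (w \<bullet> w)" for w
  have cvx: "convex_on UNIV \<psi>" using strong
    unfolding strongly_convex_def \<psi>_def by (simp add: dot_square_norm)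
  define h where "h e = \<psi> (x + e *\<^sub>R d)" for e
  have h1: "h 1 = \<psi> y" "h 0 = \<psi> x" by (simp_all add: h_def d_def)
  have dh: "(h has_real_derivative grad x \<bullet> d - \<mu> / 2 * (2 * (x \<bullet> d))) (at 0)"
  proof -
    have eq: "(\<lambda>e. (x + e *\<^sub>R d) \<bullet> (x + e *\<^sub>R d)) = (\<lambda>e. x \<bullet> x + 2 * e * (x \<bullet> d) + e^2 * (d \<bullet> d))"
      by (auto simp: fun_eq_iff inner_add_left inner_add_right inner_commute power2_eq_square algebra_simps)
    have d2: "((\<lambda>e. (x + e *\<^sub>R d) \<bullet> (x + e *\<^sub>R d)) has_real_derivative 2 * (x \<bullet> d)) (at 0)"
      unfolding eq by (rule derivative_eq_intros refl | simp)+
    show ?thesis unfolding h_def \<psi>_def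
      by (intro DERIV_diff line_deriv_scalar[OF grad] DERIV_cmult d2)
  qed
  define q where "q e = h e - h 0 - e * (h 1 - h 0)" for e
  have dq: "(q has_real_derivative (grad x \<bullet> d - \<mu> / 2 * (2 * (x \<bullet> d))) - (h 1 - h 0)) (at 0)"
    unfolding q_def by (rule derivative_eq_intros dh | simp)+
  have qle: "q e \<le> 0" if "0 < e" "e < 1" for e
  proof -
    have "x + e *\<^sub>R d = (1 - e) *\<^sub>R x + e *\<^sub>R y" by (simp add: d_def algebra_simps)
    then have "h e = \<psi> ((1 - e) *\<^sub>R x + e *\<^sub>R y)" by (simp add: h_def)
    also have "\<dots> \<le> (1 - e) * \<psi> x + e * \<psi> y"
      using cvx that by (intro convex_onD) auto
    finally show ?thesis unfolding q_def h1 by (simp add: algebra_simps)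
  qed
  have key: "grad x \<bullet> d - \<mu> * (x \<bullet> d) \<le> \<psi> y - \<psi> x"
  proof (rule ccontr)
    assume "\<not> ?thesis"
    then have "0 < (grad x \<bullet> d - \<mu> / 2 * (2 * (x \<bullet> d))) - (h 1 - h 0)" by (simp add: h1)
    then obtain dd where "dd > 0" "\<forall>e>0. e < dd \<longrightarrow> q 0 < q (0 + e)"
      using DERIV_pos_inc_right[OF dq] by force
    then have "q 0 < q (min (dd/2) (1/2))" by auto
    moreover have "q 0 = 0" by (simp add: q_def)
    moreover have "min (dd/2) (1/2) < (1::real)" by simp
    ultimately show False using qle[of "min (dd/2) (1/2)"] \<open>dd>0\<close> by linarith
  qed
  have "y = x + d" by (simp add: d_def)
  have "(norm (y - x))\<^sup>2 = d \<bullet> d" by (simp add: d_def dot_square_norm)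
  have "y \<bullet> y = x \<bullet> x + 2 * (x \<bullet> d) + d \<bullet> d"
    unfolding \<open>y = x + d\<close> by (simp add: inner_add_left inner_add_right inner_commute)
  then show ?thesis using key \<open>(norm (y - x))\<^sup>2 = d \<bullet> d\<close> unfolding \<psi>_def d_def[symmetric] by (simp add: algebra_simps)
qed

lemma sc_monotone:
  fixes \<phi> :: "'a::real_inner \<Rightarrow> real"
  assumes grad: "\<And>y. (\<phi> has_derivative (\<lambda>h. grad y \<bullet> h)) (at y)"
    and strong: "strongly_convex \<mu> \<phi>"
  shows "(grad y - grad x) \<bullet> (y - x) \<ge> \<mu> * (norm (y - x))\<^sup>2"
proof -
  have "\<phi> y \<ge> \<phi> x + grad x \<bullet> (y - x) + \<mu> / 2 * (norm (y - x))\<^sup>2"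
    by (rule sc_first_order[OF grad strong])
  moreover have "\<phi> x \<ge> \<phi> y + grad y \<bullet> (x - y) + \<mu> / 2 * (norm (x - y))\<^sup>2"
    by (rule sc_first_order[OF grad strong])
  moreover have "norm (x - y) = norm (y - x)" by (rule norm_minus_commute)
  moreover have "grad y \<bullet> (x - y) = - (grad y \<bullet> (y - x))"
    by (simp add: inner_diff_right)
  ultimately show ?thesis by (simp add: inner_diff_left)
qed

lemma hess_lower:
  fixes \<phi> :: "'a::real_inner \<Rightarrow> real"
  assumes grad: "\<And>y. (\<phi> has_derivative (\<lambda>h. grad y \<bullet> h)) (at y)"
    and strong: "strongly_convex \<mu> \<phi>"
    and hd: "(grad has_derivative blinfun_apply D) (at y)"
  shows "blinfun_apply D h \<bullet> h \<ge> \<mu> * (norm h)\<^sup>2"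
proof -
  define q where "q e = h \<bullet> grad (y + e *\<^sub>R h) - h \<bullet> grad y - e * (\<mu> * (norm h)\<^sup>2)" for e
  have dq: "(q has_real_derivative h \<bullet> blinfun_apply D h - \<mu> * (norm h)\<^sup>2) (at 0)"
    unfolding q_def
    by (rule derivative_eq_intros inner_line_deriv[OF hd] | simp)+
  have qge: "q e \<ge> 0" if "e > 0" for e
  proof -
    have "(grad (y + e *\<^sub>R h) - grad y) \<bullet> ((y + e *\<^sub>R h) - y) \<ge> \<mu> * (norm ((y + e *\<^sub>R h) - y))\<^sup>2"
      by (rule sc_monotone[OF grad strong])
    then have "e * ((grad (y + e *\<^sub>R h) - grad y) \<bullet> h) \<ge> e * (e * (\<mu> * (norm h)\<^sup>2))"
      using that by (simp add: power2_eq_square algebra_simps)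
    then have "(grad (y + e *\<^sub>R h) - grad y) \<bullet> h \<ge> e * (\<mu> * (norm h)\<^sup>2)"
      using that by (simp add: mult_le_cancel_left)
    then show ?thesis unfolding q_def by (simp add: inner_diff_left inner_diff_right inner_commute)
  qed
  show ?thesis
  proof (rule ccontr)
    assume "\<not> ?thesis"
    then have "h \<bullet> blinfun_apply D h - \<mu> * (norm h)\<^sup>2 < 0" by (simp add: inner_commute)
    then obtain dd where "dd > 0" "\<forall>e>0. e < dd \<longrightarrow> q (0 + e) < q 0"
      using DERIV_neg_dec_right[OF dq] by force
    then have "q (dd/2) < q 0" by auto
    moreover have "q 0 = 0" by (simp add: q_def)
    ultimately show False using qge[of "dd/2"] \<open>dd>0\<close> by simp
  qed
qed



lemma aux_cancel2: "(a::real) > 0 \<Longrightarrow> a * X / (2 * a) = X / 2"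
  by simp
lemma aux_cancel1: "(a::real) > 0 \<Longrightarrow> a * X / a = X"
  by simp

lemma B_deriv_lemma:
  assumes "0 < u" "\<alpha> > 0"
  shows "((\<lambda>u. C * L * (\<beta> * (u powr (\<alpha> + 2) / (\<alpha> + 2)) + u powr (\<alpha> + 3) / (2 * (\<alpha> + 3)))) has_real_derivative C * L * (\<beta> * u powr (\<alpha> + 1) + u powr (\<alpha> + 2) / 2)) (at u)"
proof -
  have a: "((\<lambda>u. u powr (\<alpha> + 2)) has_real_derivative (\<alpha> + 2) * u powr (\<alpha> + 1)) (at u)"
    using has_real_derivative_powr[of u "\<alpha> + 2"] assms by (simp add: add.commute)
  have b: "((\<lambda>u. u powr (\<alpha> + 3)) has_real_derivative (\<alpha> + 3) * u powr (\<alpha> + 2)) (at u)"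
    using has_real_derivative_powr[of u "\<alpha> + 3"] assms by (simp add: add.commute)
  have "((\<lambda>u. C * L * (\<beta> * (u powr (\<alpha> + 2) / (\<alpha> + 2)) + u powr (\<alpha> + 3) / (2 * (\<alpha> + 3)))) has_real_derivative C * L * (\<beta> * ((\<alpha> + 2) * u powr (\<alpha> + 1) / (\<alpha> + 2)) + (\<alpha> + 3) * u powr (\<alpha> + 2) / (2 * (\<alpha> + 3)))) (at u)"
    by (intro DERIV_cmult DERIV_add DERIV_cdivide a b)
  moreover have "(\<alpha> + 2) * u powr (\<alpha> + 1) / (\<alpha> + 2) = u powr (\<alpha> + 1)"
    using assms by (intro aux_cancel1) simp
  moreover have "(\<alpha> + 3) * u powr (\<alpha> + 2) / (2 * (\<alpha> + 3)) = u powr (\<alpha> + 2) / 2"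
    using assms by (intro aux_cancel2) simp
  ultimately show ?thesis by (simp only:)
qed

lemma B_identity:
  assumes "\<alpha> > 0"
  shows "C * L * (\<beta> * (P * r^2 / (\<alpha> + 2)) + P * r^3 / (2 * (\<alpha> + 3))) = P * (C * r * (1 - H_fun \<alpha> \<beta> L r))"
  unfolding H_fun_def using assms
    by (simp add: algebra_simps power2_eq_square power3_eq_cube add_divide_distrib diff_divide_distrib)

lemma idt: "(H::real) > 0 \<Longrightarrow> a > 0 \<Longrightarrow> s / a * G - G / (a * H) * s * (1 - H) = s * G / a * (2 - 1 / H)"
  by (simp add: divide_simps) (simp add: algebra_simps)

locale traj =
  fixes grad :: "'a::real_inner \<Rightarrow> 'a"
    and hess :: "'a \<Rightarrow> 'a \<Rightarrow>\<^sub>L 'a"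
    and x v acc :: "real \<Rightarrow> 'a"
    and z :: 'a
    and L \<alpha> \<beta> :: real
  assumes hess_deriv: "\<And>y. (grad has_derivative blinfun_apply (hess y)) (at y)"
    and L_pos: "L > 0"
    and lip: "L-lipschitz_on UNIV grad"
    and alpha_pos: "\<alpha> > 0" and beta_nn: "\<beta> \<ge> 0"
    and x_deriv: "\<And>s. s \<ge> 0 \<Longrightarrow> (x has_vector_derivative v s) (at s within {0..})"
    and v_cont: "continuous_on {0..} v"
    and v_deriv: "\<And>s. s > 0 \<Longrightarrow> (v has_vector_derivative acc s) (at s)"
    and ode: "\<And>s. s > 0 \<Longrightarrow>
        acc s + (\<alpha> / s) *\<^sub>R v s + \<beta> *\<^sub>R blinfun_apply (hess (x s)) (v s) + grad (x s) = 0"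
    and init_x: "x 0 = z" and init_v: "v 0 = 0"
begin

lemma hess_bd: "norm (blinfun_apply (hess y) h) \<le> L * norm h"
  by (rule hess_norm[OF hess_deriv lip])

lemma x_deriv_at: "s > 0 \<Longrightarrow> (x has_vector_derivative v s) (at s)"
  using x_deriv[of s] at_within_interior[of s "{0..}"] by (simp add: interior_real_atLeast)

lemma x_cont: "continuous_on {0..} x"
  using x_deriv has_vector_derivative_continuous continuous_on_eq_continuous_within by fastforce

lemma grad_cont: "continuous_on UNIV grad"
  by (rule lipschitz_on_continuous_on[OF lip])

definition F :: "'a \<Rightarrow> real \<Rightarrow> 'a" where
  "F c r = (r powr \<alpha>) *\<^sub>R v r + (r powr (\<alpha> + 1) / (\<alpha> + 1)) *\<^sub>R c"

lemma F0: "F c 0 = 0"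
  using alpha_pos by (simp add: F_def init_v)

lemma F_cont: "continuous_on {0..} (F c)"
  unfolding F_def using alpha_pos
  by (intro continuous_intros continuous_on_powr' v_cont) auto

lemma F_deriv:
  assumes "r > 0"
  shows "(F c has_vector_derivative
     - ((r powr \<alpha>) *\<^sub>R (\<beta> *\<^sub>R blinfun_apply (hess (x r)) (v r) + (grad (x r) - c)))) (at r)"
proof -
  have d1: "((\<lambda>r. r powr \<alpha>) has_real_derivative \<alpha> * r powr (\<alpha> - 1)) (at r)"
    using assms by (auto intro!: derivative_eq_intros)
  have d2: "((\<lambda>r. r powr (\<alpha> + 1) / (\<alpha> + 1)) has_real_derivative r powr \<alpha>) (at r)"
    using assms alpha_pos by (auto intro!: derivative_eq_intros)
  have "(F c has_vector_derivative
     ((\<alpha> * r powr (\<alpha> - 1)) *\<^sub>R v r + (r powr \<alpha>) *\<^sub>R acc r + (r powr \<alpha>) *\<^sub>R c)) (at r)"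
    unfolding F_def
    apply (rule has_vector_derivative_add)
     apply (rule has_vector_derivative_eq_rhs)
      apply (rule has_vector_derivative_scaleR[OF d1 v_deriv[OF assms]])
     apply (simp add: algebra_simps)
    apply (rule has_vector_derivative_eq_rhs)
     apply (rule has_vector_derivative_scaleR[OF d2 has_vector_derivative_const])
    apply simp
    done
  moreover have "r powr (\<alpha> - 1) = r powr \<alpha> / r"
    using assms by (simp add: powr_diff)
  moreover have "acc r = - ((\<alpha> / r) *\<^sub>R v r + \<beta> *\<^sub>R blinfun_apply (hess (x r)) (v r) + grad (x r))"
    using ode[OF assms] by (simp add: eq_neg_iff_add_eq_0 algebra_simps)
  ultimately show ?thesis
    by (simp add: algebra_simps)
qed


lemma F_bound:
  assumes r: "r > 0" and Bc: "continuous_on {0..r} B" and B0: "B 0 = 0"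
    and Bd: "\<And>u. 0 < u \<Longrightarrow> u < r \<Longrightarrow> (B has_real_derivative B' u) (at u)"
    and le: "\<And>u. 0 < u \<Longrightarrow> u < r \<Longrightarrow>
       norm ((u powr \<alpha>) *\<^sub>R (\<beta> *\<^sub>R blinfun_apply (hess (x u)) (v u) + (grad (x u) - c))) \<le> B' u"
  shows "norm (F c r) \<le> B r"
proof -
  have "norm (F c r - F c 0) \<le> B r - B 0"
    apply (rule differentiable_bound_general[OF r continuous_on_subset[OF F_cont] Bc])
       apply force
      apply (rule F_deriv, simp)
     apply (rule Bd[unfolded has_real_derivative_iff_has_vector_derivative]; simp)
    using le by simp
  then show ?thesis by (simp add: F0 B0)
qed

lemma powr_succ: "u > 0 \<Longrightarrow> u powr (\<alpha> + k) = u powr \<alpha> * u powr k"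
  by (simp add: powr_add)

lemma apriori:
  assumes s: "s > 0"
  shows "\<exists>K\<ge>0. \<forall>r. 0 < r \<longrightarrow> r \<le> s \<longrightarrow> norm (v r) \<le> K * r"
proof -
  define N where "N u = \<beta> * L * norm (v u) + norm (grad (x u))" for u
  have Nc: "continuous_on {0..s} N"
    unfolding N_def
    by (intro continuous_intros continuous_on_subset[OF v_cont]
        continuous_on_compose2[OF grad_cont continuous_on_subset[OF x_cont]]) auto
  then have "bounded (N ` {0..s})"
    by (intro compact_imp_bounded compact_continuous_image) auto
  then obtain K0 where K0: "\<And>u. u \<in> {0..s} \<Longrightarrow> norm (N u) \<le> K0"
    unfolding bounded_iff by (metis imageI)
  have K0nn: "K0 \<ge> 0" using K0[of 0] s by (smt (verit) atLeastAtMost_iff norm_ge_zero)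
  have "norm (v r) \<le> (K0 / (\<alpha> + 1)) * r" if r: "0 < r" "r \<le> s" for r
  proof -
    define B where "B u = K0 * (u powr (\<alpha> + 1) / (\<alpha> + 1))" for u
    have "norm (F 0 r) \<le> B r"
    proof (rule F_bound[OF r(1)])
      show "continuous_on {0..r} B" unfolding B_def using alpha_pos
        by (intro continuous_intros continuous_on_powr') auto
      show "B 0 = 0" using alpha_pos by (simp add: B_def)
      show "(B has_real_derivative K0 * u powr \<alpha>) (at u)" if "0 < u" for u
        unfolding B_def using that alpha_pos by (auto intro!: derivative_eq_intros)
      show "norm ((u powr \<alpha>) *\<^sub>R (\<beta> *\<^sub>R blinfun_apply (hess (x u)) (v u) + (grad (x u) - 0))) \<le> K0 * u powr \<alpha>"
        if "0 < u" "u < r" for u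
      proof -
        have "norm (\<beta> *\<^sub>R blinfun_apply (hess (x u)) (v u) + grad (x u))
            \<le> \<beta> * norm (blinfun_apply (hess (x u)) (v u)) + norm (grad (x u))"
          using beta_nn by (metis abs_of_nonneg norm_scaleR norm_triangle_ineq)
        also have "\<dots> \<le> \<beta> * (L * norm (v u)) + norm (grad (x u))"
          using beta_nn hess_bd by (simp add: mult_left_mono)
        also have "\<dots> \<le> K0" using K0[of u] that r unfolding N_def by auto
        finally show ?thesis using that by (simp add: mult_left_mono mult.commute)
      qed
    qed
    then have "r powr \<alpha> * norm (v r) \<le> r powr \<alpha> * ((K0 / (\<alpha> + 1)) * r)"
      unfolding F_def B_def using r powr_succ[of r 1] by (simp add: algebra_simps)
    moreover have "r powr \<alpha> > 0" using r by simp
    ultimately show ?thesis using mult_le_cancel_left_pos by blast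
  qed
  then show ?thesis using K0nn alpha_pos by (intro exI[of _ "K0 / (\<alpha> + 1)"]) auto
qed


lemma x_bound:
  assumes r: "r > 0" and vb: "\<And>u. 0 < u \<Longrightarrow> u \<le> r \<Longrightarrow> norm (v u) \<le> C * u"
  shows "norm (x r - z) \<le> C * r\<^sup>2 / 2"
proof -
  have "norm (x r - x 0) \<le> C * r\<^sup>2 / 2 - C * 0\<^sup>2 / 2"
  proof (rule differentiable_bound_general[OF r, where f'=v and \<phi>'="\<lambda>u. C * u"])
    show "continuous_on {0..r} x" by (rule continuous_on_subset[OF x_cont]) auto
    show "continuous_on {0..r} (\<lambda>u. C * u\<^sup>2 / 2)" by (intro continuous_intros) auto
    show "(x has_vector_derivative v u) (at u)" if "0 < u" "u < r" for u
      using x_deriv_at that by simp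
    show "((\<lambda>u. C * u\<^sup>2 / 2) has_vector_derivative C * u) (at u)" for u
      unfolding has_real_derivative_iff_has_vector_derivative[symmetric]
      by (auto intro!: derivative_eq_intros)
    show "norm (v u) \<le> C * u" if "0 < u" "u < r" for u
      using vb that by simp
  qed
  then show ?thesis by (simp add: init_x)
qed

lemma vel_lower:
  assumes s: "s > 0" and Hpos: "H_fun \<alpha> \<beta> L s > 0"
  shows "norm (v s) \<ge> s * norm (grad z) / (\<alpha> + 1) * (2 - 1 / H_fun \<alpha> \<beta> L s)"
proof -
  define g where "g = grad z"
  define Hs where "Hs = H_fun \<alpha> \<beta> L s"
  define S where "S = (\<lambda>r. norm (v r) / r) ` {0<..s}"
  define C where "C = Sup S"
  obtain K where K: "\<And>r. 0 < r \<Longrightarrow> r \<le> s \<Longrightarrow> norm (v r) \<le> K * r"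
    using apriori[OF s] by blast
  have bdd: "bdd_above S" unfolding S_def
    by (rule bdd_aboveI[of _ K]) (auto simp: K divide_le_eq)
  have Sne: "S \<noteq> {}" using s by (auto simp: S_def)
  have vC: "norm (v r) \<le> C * r" if "0 < r" "r \<le> s" for r
  proof -
    have "norm (v r) / r \<le> C" unfolding C_def
      by (rule cSup_upper[OF _ bdd]) (use that in \<open>auto simp: S_def\<close>)
    then show ?thesis using that by (simp add: divide_le_eq)
  qed
  have C0: "C \<ge> 0" using vC[of s] s
  proof -
    have "0 \<le> C * s" using vC[of s] s norm_ge_zero order_trans by blast
    then show ?thesis using s by (simp add: zero_le_mult_iff)
  qed
  have step0: "norm (v r + (r / (\<alpha> + 1)) *\<^sub>R g) \<le> C * r * (1 - Hs)" if r: "0 < r" "r \<le> s" for r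
  proof -
    define B where "B u = C * L * (\<beta> * (u powr (\<alpha> + 2) / (\<alpha> + 2)) + u powr (\<alpha> + 3) / (2 * (\<alpha> + 3)))" for u
    have "norm (F g r) \<le> B r"
    proof (rule F_bound[OF r(1)])
      show "continuous_on {0..r} B" unfolding B_def using alpha_pos
        by (intro continuous_intros continuous_on_powr') auto
      show "B 0 = 0" using alpha_pos by (simp add: B_def)
      show "(B has_real_derivative C * L * (\<beta> * u powr (\<alpha> + 1) + u powr (\<alpha> + 2) / 2)) (at u)" if "0 < u" for u
        unfolding B_def using B_deriv_lemma[OF that alpha_pos] .
      show "norm ((u powr \<alpha>) *\<^sub>R (\<beta> *\<^sub>R blinfun_apply (hess (x u)) (v u) + (grad (x u) - g)))
           \<le> C * L * (\<beta> * u powr (\<alpha> + 1) + u powr (\<alpha> + 2) / 2)"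
        if u: "0 < u" "u < r" for u
      proof -
        have "norm (\<beta> *\<^sub>R blinfun_apply (hess (x u)) (v u) + (grad (x u) - g))
            \<le> \<beta> * norm (blinfun_apply (hess (x u)) (v u)) + norm (grad (x u) - grad z)"
          using beta_nn unfolding g_def by (metis abs_of_nonneg norm_scaleR norm_triangle_ineq)
        also have "\<dots> \<le> \<beta> * (L * norm (v u)) + L * norm (x u - z)"
          using beta_nn hess_bd lipschitz_onD[OF lip, of "x u" z]
          by (intro add_mono mult_left_mono) (auto simp: dist_norm)
        also have "\<dots> \<le> \<beta> * (L * (C * u)) + L * (C * u\<^sup>2 / 2)"
        proof -
          have 1: "norm (v u) \<le> C * u" using vC u r by simp
          have 2: "norm (x u - z) \<le> C * u\<^sup>2 / 2" by (rule x_bound) (use u r vC in auto)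
          show ?thesis using beta_nn L_pos 1 2 by (intro add_mono mult_left_mono) simp_all
        qed
        finally have *: "norm (\<beta> *\<^sub>R blinfun_apply (hess (x u)) (v u) + (grad (x u) - g))
            \<le> \<beta> * (L * (C * u)) + L * (C * u\<^sup>2 / 2)" .
        have "norm ((u powr \<alpha>) *\<^sub>R (\<beta> *\<^sub>R blinfun_apply (hess (x u)) (v u) + (grad (x u) - g)))
            \<le> u powr \<alpha> * (\<beta> * (L * (C * u)) + L * (C * u\<^sup>2 / 2))"
          using * u by (simp add: mult_left_mono)
        also have "\<dots> = C * L * (\<beta> * u powr (\<alpha> + 1) + u powr (\<alpha> + 2) / 2)"
          using u powr_succ[of u 1] powr_succ[of u 2] by (simp add: algebra_simps power2_eq_square)
        finally show ?thesis .
      qed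
    qed
    moreover have "F g r = r powr \<alpha> *\<^sub>R (v r + (r / (\<alpha> + 1)) *\<^sub>R g)"
      unfolding F_def using r powr_succ[of r 1] by (simp add: algebra_simps)
    moreover have "B r = r powr \<alpha> * (C * r * (1 - H_fun \<alpha> \<beta> L r))"
    proof -
      have "r powr 2 = r^2" "r powr 3 = r^3" using r by (simp_all add: powr_realpow)
      then show ?thesis unfolding B_def using r powr_succ[of r 2] powr_succ[of r 3]
        B_identity[OF alpha_pos, of C L \<beta> "r powr \<alpha>" r] by (simp add: mult.assoc)
    qed
    ultimately have "r powr \<alpha> * norm (v r + (r / (\<alpha> + 1)) *\<^sub>R g) \<le> r powr \<alpha> * (C * r * (1 - H_fun \<alpha> \<beta> L r))"
      using r by simp
    then have a: "norm (v r + (r / (\<alpha> + 1)) *\<^sub>R g) \<le> C * r * (1 - H_fun \<alpha> \<beta> L r)"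
      using r mult_le_cancel_left_pos[of "r powr \<alpha>"] by simp
    have "1 - H_fun \<alpha> \<beta> L r \<le> 1 - Hs"
    proof -
      have "\<beta> * L * r \<le> \<beta> * L * s" using r beta_nn L_pos by (simp add: mult_left_mono)
      moreover have "L * r\<^sup>2 \<le> L * s\<^sup>2" using r L_pos by (simp add: mult_left_mono power_mono)
      ultimately have "\<beta> * L * r / (\<alpha> + 2) \<le> \<beta> * L * s / (\<alpha> + 2)"
        and "L * r\<^sup>2 / (2 * (\<alpha> + 3)) \<le> L * s\<^sup>2 / (2 * (\<alpha> + 3))"
        using alpha_pos by (auto intro!: divide_right_mono)
      then show ?thesis unfolding Hs_def H_fun_def by linarith
    qed
    then have "C * r * (1 - H_fun \<alpha> \<beta> L r) \<le> C * r * (1 - Hs)"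
      using C0 r by (simp add: mult_left_mono)
    with a show "norm (v r + (r / (\<alpha> + 1)) *\<^sub>R g) \<le> C * r * (1 - Hs)" by linarith
  qed
  have step: "norm (v r) / r \<le> norm g / (\<alpha> + 1) + C * (1 - Hs)" if r: "0 < r" "r \<le> s" for r
  proof -
    have "norm (v r + (r / (\<alpha> + 1)) *\<^sub>R g) \<le> C * r * (1 - Hs)" using step0 r .
    moreover have "norm (v r) \<le> norm (v r + (r / (\<alpha> + 1)) *\<^sub>R g) + r / (\<alpha> + 1) * norm g"
      using norm_triangle_ineq4[of "v r + (r / (\<alpha> + 1)) *\<^sub>R g" "(r / (\<alpha> + 1)) *\<^sub>R g"] r alpha_pos
      by simp
    ultimately have "norm (v r) \<le> r * (norm g / (\<alpha> + 1) + C * (1 - Hs))"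
      by (simp add: algebra_simps)
    then show ?thesis using r by (simp add: divide_le_eq mult.commute)
  qed
  have "C \<le> norm g / (\<alpha> + 1) + C * (1 - Hs)"
    unfolding C_def[of] using Sne step
    by (intro cSup_least) (auto simp: S_def C_def)
  then have CH: "C * Hs \<le> norm g / (\<alpha> + 1)" by (simp add: algebra_simps)
  have Hs1: "Hs \<le> 1"
  proof -
    have "0 \<le> \<beta> * L * s / (\<alpha> + 2)" using s alpha_pos beta_nn L_pos by simp
    moreover have "0 \<le> L * s\<^sup>2 / (2 * (\<alpha> + 3))" using s alpha_pos L_pos by simp
    ultimately show ?thesis unfolding Hs_def H_fun_def by linarith
  qed
  have Hs0: "Hs > 0" using Hpos Hs_def by simp
  have CH2: "C \<le> norm g / ((\<alpha> + 1) * Hs)"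
  proof -
    have "C * ((\<alpha> + 1) * Hs) \<le> norm g" using CH alpha_pos by (simp add: field_simps)
    moreover have "(\<alpha> + 1) * Hs > 0" using Hs0 alpha_pos by simp
    ultimately show ?thesis by (simp add: pos_le_divide_eq)
  qed
  have "norm ((s / (\<alpha> + 1)) *\<^sub>R g) \<le> norm (v s + (s / (\<alpha> + 1)) *\<^sub>R g) + norm (v s)"
    using norm_triangle_ineq4[of "v s + (s / (\<alpha> + 1)) *\<^sub>R g" "v s"] by simp
  then have "s / (\<alpha> + 1) * norm g - C * s * (1 - Hs) \<le> norm (v s)"
    using step0[of s] s alpha_pos by simp
  moreover have "C * s * (1 - Hs) \<le> norm g / ((\<alpha> + 1) * Hs) * s * (1 - Hs)"
    using CH2 s Hs1 by (intro mult_right_mono) auto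
  moreover have "s / (\<alpha> + 1) * norm g - norm g / ((\<alpha> + 1) * Hs) * s * (1 - Hs)
      = s * norm g / (\<alpha> + 1) * (2 - 1 / Hs)"
    using Hs0 alpha_pos by (intro idt) auto
  ultimately show ?thesis unfolding g_def Hs_def by linarith
qed

end


lemma decr_mvt:
  fixes f :: "real \<Rightarrow> real"
  assumes "a < b" "continuous_on {a..b} f"
    and "\<And>s. a < s \<Longrightarrow> s < b \<Longrightarrow> (f has_real_derivative d s) (at s)"
    and "\<And>s. a < s \<Longrightarrow> s < b \<Longrightarrow> d s \<le> 0"
  shows "f b \<le> f a"
proof -
  obtain \<xi> where xi: "a < \<xi>" "\<xi> < b" "f b - f a = d \<xi> * (b - a)"
    using mvt[OF assms(1,2), of "\<lambda>s. (*) (d s)"] assms(3)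
    by (metis has_field_derivative_def)
  have "d \<xi> * (b - a) \<le> 0" using assms(4)[OF xi(1,2)] assms(1)
    by (intro mult_nonpos_nonneg) auto
  then show ?thesis using xi(3) by linarith
qed

lemma comp_deriv:
  fixes \<phi> :: "'a::real_inner \<Rightarrow> real"
  assumes "(\<phi> has_derivative (\<lambda>h. G \<bullet> h)) (at (x s))" "(x has_vector_derivative w) (at s)"
  shows "((\<lambda>s. \<phi> (x s)) has_real_derivative G \<bullet> w) (at s)"
proof -
  have "((\<lambda>s. \<phi> (x s)) has_derivative (\<lambda>h. G \<bullet> (h *\<^sub>R w))) (at s)"
    using has_derivative_compose[OF assms(2)[unfolded has_vector_derivative_def] assms(1)]
    by (simp add: o_def)
  moreover have "(\<lambda>h. G \<bullet> (h *\<^sub>R w)) = (*) (G \<bullet> w)" by (auto simp: fun_eq_iff)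
  ultimately show ?thesis by (simp add: has_field_derivative_def)
qed

lemma PL:
  fixes \<phi> :: "'a::real_inner \<Rightarrow> real"
  assumes grad: "\<And>y. (\<phi> has_derivative (\<lambda>h. grad y \<bullet> h)) (at y)"
    and strong: "strongly_convex \<mu> \<phi>" and mu: "\<mu> > 0"
    and ys: "\<phi> ys = \<phi>star"
  shows "(norm (grad z))\<^sup>2 \<ge> 2 * \<mu> * (\<phi> z - \<phi>star)"
proof -
  define d where "d = ys - z"
  define g where "g = grad z"
  have "\<phi>star \<ge> \<phi> z + g \<bullet> d + \<mu> / 2 * (norm d)\<^sup>2"
    using sc_first_order[OF grad strong, of z ys] ys by (simp add: d_def g_def)
  moreover have "0 \<le> (g + \<mu> *\<^sub>R d) \<bullet> (g + \<mu> *\<^sub>R d)" by simp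
  moreover have "(g + \<mu> *\<^sub>R d) \<bullet> (g + \<mu> *\<^sub>R d) = g \<bullet> g + 2 * \<mu> * (g \<bullet> d) + \<mu>\<^sup>2 * (d \<bullet> d)"
    by (simp add: inner_add_left inner_add_right inner_commute power2_eq_square algebra_simps)
  ultimately have "0 \<le> (norm g)\<^sup>2 + 2 * \<mu> * (g \<bullet> d) + \<mu>\<^sup>2 * (norm d)\<^sup>2"
    by (simp add: power2_norm_eq_inner)
  have "2 * \<mu> * (\<phi> z - \<phi>star) \<le> 2 * \<mu> * (- (g \<bullet> d) - \<mu> / 2 * (norm d)\<^sup>2)"
    using mu \<open>\<phi>star \<ge> \<phi> z + g \<bullet> d + \<mu> / 2 * (norm d)\<^sup>2\<close> by (intro mult_left_mono) auto
  also have "\<dots> = - 2 * \<mu> * (g \<bullet> d) - \<mu>\<^sup>2 * (norm d)\<^sup>2" by (simp add: power2_eq_square algebra_simps)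
  also have "\<dots> \<le> (norm g)\<^sup>2" using \<open>0 \<le> (norm g)\<^sup>2 + 2 * \<mu> * (g \<bullet> d) + \<mu>\<^sup>2 * (norm d)\<^sup>2\<close> by linarith
  finally show ?thesis by (simp add: g_def)
qed

lemma H_tau_half:
  assumes a: "\<alpha> > 0" and b: "\<beta> \<ge> 0" and L: "L > 0" and t: "0 < \<tau>" "\<tau> < tau2 \<alpha> \<beta> L"
  shows "H_fun \<alpha> \<beta> L \<tau> > 1 / 2"
proof -
  define bb where "bb = (\<alpha> + 3) / (\<alpha> + 2) * \<beta>"
  define c where "c = (\<alpha> + 3) / L"
  have bb0: "bb \<ge> 0" using a b by (simp add: bb_def)
  have c0: "c > 0" using a L by (simp add: c_def)
  have s1: "((\<alpha> + 3) / (\<alpha> + 2))\<^sup>2 * \<beta>\<^sup>2 = bb\<^sup>2" unfolding bb_def by (rule power_mult_distrib[symmetric])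
  have s2: "- (\<alpha> + 3) / (\<alpha> + 2) * \<beta> = - bb" unfolding bb_def by (metis minus_divide_left mult_minus_left)
  have "tau2 \<alpha> \<beta> L = - bb + sqrt (bb\<^sup>2 + c)" unfolding tau2_def s1 s2 c_def ..
  then have lt: "\<tau> + bb < sqrt (bb\<^sup>2 + c)" using t(2) by linarith
  have "(\<tau> + bb)\<^sup>2 < (sqrt (bb\<^sup>2 + c))\<^sup>2"
    by (rule power_strict_mono[OF lt]) (use t bb0 in auto)
  also have "(sqrt (bb\<^sup>2 + c))\<^sup>2 = bb\<^sup>2 + c" using c0 by (simp add: add_nonneg_pos less_imp_le)
  finally have "(\<tau> + bb)\<^sup>2 < bb\<^sup>2 + c" .
  then have "\<tau>\<^sup>2 + 2 * bb * \<tau> < c" by (simp add: power2_eq_square algebra_simps)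
  then have "L / (2 * (\<alpha> + 3)) * (\<tau>\<^sup>2 + 2 * bb * \<tau>) < L / (2 * (\<alpha> + 3)) * c"
    using a L by (intro mult_strict_left_mono) auto
  moreover have "L / (2 * (\<alpha> + 3)) * c = 1 / 2" using a L by (simp add: c_def)
  moreover have "L / (2 * (\<alpha> + 3)) * (\<tau>\<^sup>2 + 2 * bb * \<tau>) = L * \<tau>\<^sup>2 / (2 * (\<alpha> + 3)) + \<beta> * L * \<tau> / (\<alpha> + 2)"
    using a by (simp add: bb_def divide_simps) (simp add: algebra_simps)
  ultimately show ?thesis unfolding H_fun_def by linarith
qed

theorem mainTheorem10:
  fixes \<phi> :: "'a::euclidean_space \<Rightarrow> real"
    and grad :: "'a \<Rightarrow> 'a"
    and hess :: "'a \<Rightarrow> 'a \<Rightarrow>\<^sub>L 'a"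
    and x v acc :: "real \<Rightarrow> 'a"
    and z :: 'a
    and \<mu> L \<alpha> \<beta> lam \<phi>star \<tau> t :: real
  assumes grad: "\<And>y. (\<phi> has_derivative (\<lambda>h. grad y \<bullet> h)) (at y)"
    and hess: "\<And>y. (grad has_derivative blinfun_apply (hess y)) (at y)"
    and hess_cont: "continuous_on UNIV hess"
    and mu_pos: "\<mu> > 0"
    and strong: "strongly_convex \<mu> \<phi>"
    and L_pos: "L > 0"
    and lip: "L-lipschitz_on UNIV grad"
    and min_val: "\<And>y. \<phi>star \<le> \<phi> y" and min_att: "\<exists>y. \<phi> y = \<phi>star"
    and alpha_pos: "\<alpha> > 0" and beta_nn: "\<beta> \<ge> 0"
    and lam: "0 \<le> lam" "lam \<le> 1"
    and x_deriv: "\<And>s. s \<ge> 0 \<Longrightarrow> (x has_vector_derivative v s) (at s within {0..})"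
    and v_cont: "continuous_on {0..} v"
    and v_deriv: "\<And>s. s > 0 \<Longrightarrow> (v has_vector_derivative acc s) (at s)"
    and acc_cont: "continuous_on {0<..} acc"
    and ode: "\<And>s. s > 0 \<Longrightarrow>
        acc s + (\<alpha> / s) *\<^sub>R v s + \<beta> *\<^sub>R blinfun_apply (hess (x s)) (v s) + grad (x s) = 0"
    and init_x: "x 0 = z" and init_v: "v 0 = 0"
    and z_not_min: "z \<notin> {y. \<phi> y = \<phi>star}"
    and tau_pos: "0 < \<tau>" and tau_lt: "\<tau> < tau2 \<alpha> \<beta> L"
    and tau_le_T: "ereal \<tau> \<le> T_lambda \<alpha> lam v acc"
    and t_ge: "\<tau> \<le> t" and t_le_T: "ereal t \<le> T_lambda \<alpha> lam v acc"
  shows "\<phi> (x t) - \<phi>star \<le>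
    (1 - (\<alpha> * (1 - lam) / 2 + \<beta> * \<mu> * \<tau> / 3)
         * (2 * \<mu> * \<tau>\<^sup>2 * Psi_fun \<alpha> \<beta> L \<tau> / (\<alpha> + 1)\<^sup>2))
    * (\<phi> z - \<phi>star)"
proof -
  interpret tr: traj grad hess x v acc z L \<alpha> \<beta>
    by (unfold_locales) (use hess L_pos lip alpha_pos beta_nn x_deriv v_cont v_deriv ode init_x init_v in auto)
  define g where "g = grad z"
  define Ht where "Ht = H_fun \<alpha> \<beta> L \<tau>"
  define A where "A = (norm g)\<^sup>2 * Psi_fun \<alpha> \<beta> L \<tau> / (\<alpha> + 1)\<^sup>2"
  define P where "P = \<alpha> * (1 - lam) / 2 + \<beta> * \<mu> * \<tau> / 3"
  have Ht: "Ht > 1 / 2" unfolding Ht_def by (rule H_tau_half[OF alpha_pos beta_nn L_pos tau_pos tau_lt])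
  have P0: "P \<ge> 0" unfolding P_def using alpha_pos lam beta_nn mu_pos tau_pos by simp
  have phic: "continuous_on UNIV \<phi>"
    using grad has_derivative_continuous continuous_at_imp_continuous_on by blast
  have hl: "blinfun_apply (hess y) h \<bullet> h \<ge> \<mu> * (norm h)\<^sup>2" for y h
    by (rule hess_lower[OF grad strong hess])
  have vpos: "varphi \<alpha> lam v acc s > 0" if "0 < s" "s < t" for s
  proof (rule ccontr)
    assume "\<not> ?thesis"
    then have "ereal s \<in> ereal ` {t. t > 0 \<and> varphi \<alpha> lam v acc t \<le> 0}" using that by auto
    then have "T_lambda \<alpha> lam v acc \<le> ereal s" unfolding T_lambda_def by (rule Inf_lower)
    with t_le_T have "ereal t \<le> ereal s" by (rule order_trans)
    with that show False by simp
  qed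
  have dphi: "((\<lambda>s. \<phi> (x s)) has_real_derivative grad (x s) \<bullet> v s) (at s)" if "s > 0" for s
    by (rule comp_deriv[OF grad tr.x_deriv_at[OF that]])
  have dbound: "grad (x s) \<bullet> v s \<le> - ((1 - lam) * \<alpha> / s + \<beta> * \<mu>) * (norm (v s))\<^sup>2"
    if "0 < s" "s < t" for s
  proof -
    have "grad (x s) = - (acc s + (\<alpha> / s) *\<^sub>R v s + \<beta> *\<^sub>R blinfun_apply (hess (x s)) (v s))"
    proof -
      have "grad (x s) = (acc s + (\<alpha> / s) *\<^sub>R v s + \<beta> *\<^sub>R blinfun_apply (hess (x s)) (v s) + grad (x s))
          - (acc s + (\<alpha> / s) *\<^sub>R v s + \<beta> *\<^sub>R blinfun_apply (hess (x s)) (v s))"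
        by (simp only: add_diff_cancel_left')
      also have "\<dots> = - (acc s + (\<alpha> / s) *\<^sub>R v s + \<beta> *\<^sub>R blinfun_apply (hess (x s)) (v s))"
        using ode[OF that(1)] by simp
      finally show ?thesis .
    qed
    then have e: "grad (x s) \<bullet> v s = - (v s \<bullet> acc s) - \<alpha> / s * (norm (v s))\<^sup>2
        - \<beta> * (blinfun_apply (hess (x s)) (v s) \<bullet> v s)"
      by (simp add: inner_add_left inner_diff_left inner_diff_right inner_minus_right inner_commute power2_norm_eq_inner)
    define k where "k = \<alpha> / s"
    define N where "N = (norm (v s))\<^sup>2"
    define hv where "hv = blinfun_apply (hess (x s)) (v s) \<bullet> v s"
    have f1: "0 < v s \<bullet> acc s + lam * (k * N)"
      using vpos[OF that] by (simp add: varphi_def k_def N_def)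
    have f2: "\<beta> * (\<mu> * N) \<le> \<beta> * hv"
      using hl beta_nn unfolding N_def hv_def by (intro mult_left_mono) auto
    have e2: "grad (x s) \<bullet> v s = - (v s \<bullet> acc s) - k * N - \<beta> * hv"
      unfolding e k_def N_def hv_def by simp
    have e3: "- ((1 - lam) * \<alpha> / s + \<beta> * \<mu>) * (norm (v s))\<^sup>2 = - (k * N) + lam * (k * N) - \<beta> * (\<mu> * N)"
    proof -
      have "(1 - lam) * \<alpha> / s = (1 - lam) * k" by (simp add: k_def)
      then show ?thesis unfolding N_def[symmetric] by (simp only: ) (simp add: algebra_simps)
    qed
    show ?thesis unfolding e2 e3 using f1 f2 by linarith
  qed
  have vlow: "(norm (v s))\<^sup>2 \<ge> s\<^sup>2 * A" if "0 < s" "s \<le> \<tau>" for s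
  proof -
    have Hs: "H_fun \<alpha> \<beta> L s \<ge> Ht"
    proof -
      have "\<beta> * L * s \<le> \<beta> * L * \<tau>" using that beta_nn L_pos by (simp add: mult_left_mono)
      moreover have "L * s\<^sup>2 \<le> L * \<tau>\<^sup>2" using that L_pos by (simp add: mult_left_mono power_mono)
      ultimately have "\<beta> * L * s / (\<alpha> + 2) \<le> \<beta> * L * \<tau> / (\<alpha> + 2)"
        and "L * s\<^sup>2 / (2 * (\<alpha> + 3)) \<le> L * \<tau>\<^sup>2 / (2 * (\<alpha> + 3))"
        using alpha_pos by (auto intro!: divide_right_mono)
      then show ?thesis unfolding Ht_def H_fun_def by linarith
    qed
    have q: "0 \<le> 2 - 1 / Ht" "2 - 1 / Ht \<le> 2 - 1 / H_fun \<alpha> \<beta> L s"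
      using Ht Hs by (auto simp: field_simps)
    have "s * norm g / (\<alpha> + 1) * (2 - 1 / Ht) \<le> s * norm g / (\<alpha> + 1) * (2 - 1 / H_fun \<alpha> \<beta> L s)"
      using q that alpha_pos by (intro mult_left_mono) auto
    also have "\<dots> \<le> norm (v s)"
      unfolding g_def using tr.vel_lower[OF that(1)] Hs Ht by simp
    finally have "s * norm g / (\<alpha> + 1) * (2 - 1 / Ht) \<le> norm (v s)" .
    moreover have "0 \<le> s * norm g / (\<alpha> + 1) * (2 - 1 / Ht)" using q that alpha_pos by simp
    ultimately have "(s * norm g / (\<alpha> + 1) * (2 - 1 / Ht))\<^sup>2 \<le> (norm (v s))\<^sup>2"
      by (rule power_mono)
    moreover have "(s * norm g / (\<alpha> + 1) * (2 - 1 / Ht))\<^sup>2 = s\<^sup>2 * A"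
      unfolding A_def Psi_fun_def Ht_def by (simp add: power_mult_distrib power_divide)
    ultimately show ?thesis by simp
  qed
  have A0: "A \<ge> 0" unfolding A_def Psi_fun_def by simp
  define D where "D s = \<phi> (x s) + A * ((1 - lam) * \<alpha> * s\<^sup>2 / 2 + \<beta> * \<mu> * s ^ 3 / 3)" for s
  have "D \<tau> \<le> D 0"
  proof (rule decr_mvt[OF tau_pos])
    show "continuous_on {0..\<tau>} D" unfolding D_def
      by (intro continuous_intros continuous_on_compose2[OF phic continuous_on_subset[OF tr.x_cont]]) auto
    show "(D has_real_derivative grad (x s) \<bullet> v s + A * ((1 - lam) * \<alpha> * s + \<beta> * \<mu> * s\<^sup>2)) (at s)"
      if "0 < s" for s
      unfolding D_def
      by (rule derivative_eq_intros dphi[OF that] refl | simp)+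
    show "grad (x s) \<bullet> v s + A * ((1 - lam) * \<alpha> * s + \<beta> * \<mu> * s\<^sup>2) \<le> 0"
      if "0 < s" "s < \<tau>" for s
    proof -
      have c0: "(1 - lam) * \<alpha> / s + \<beta> * \<mu> \<ge> 0" using that lam alpha_pos beta_nn mu_pos by simp
      have "grad (x s) \<bullet> v s \<le> - ((1 - lam) * \<alpha> / s + \<beta> * \<mu>) * (norm (v s))\<^sup>2"
        using dbound that t_ge by simp
      also have "\<dots> \<le> - ((1 - lam) * \<alpha> / s + \<beta> * \<mu>) * (s\<^sup>2 * A)"
      proof -
        have "((1 - lam) * \<alpha> / s + \<beta> * \<mu>) * (s\<^sup>2 * A) \<le> ((1 - lam) * \<alpha> / s + \<beta> * \<mu>) * (norm (v s))\<^sup>2"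
          using vlow[of s] that c0 by (intro mult_left_mono) auto
        then show ?thesis by (simp only: mult_minus_left neg_le_iff_le)
      qed
      also have "\<dots> = - (A * ((1 - lam) * \<alpha> * s + \<beta> * \<mu> * s\<^sup>2))"
        using that by (simp add: field_simps power2_eq_square)
      finally show ?thesis by simp
    qed
  qed
  then have ph1: "\<phi> (x \<tau>) \<le> \<phi> z - A * \<tau>\<^sup>2 * P"
    unfolding D_def P_def using init_x by (simp add: algebra_simps power2_eq_square power3_eq_cube)
  have ph2: "\<phi> (x t) \<le> \<phi> (x \<tau>)"
  proof (cases "\<tau> = t")
    case True then show ?thesis by simp
  next
    case False
    then have lt: "\<tau> < t" using t_ge by simp
    show ?thesis
    proof (rule decr_mvt[OF lt])
      show "continuous_on {\<tau>..t} (\<lambda>s. \<phi> (x s))"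
        by (intro continuous_on_compose2[OF phic continuous_on_subset[OF tr.x_cont]]) (use tau_pos in auto)
      show "((\<lambda>s. \<phi> (x s)) has_real_derivative grad (x s) \<bullet> v s) (at s)" if "\<tau> < s" for s
        using dphi that tau_pos by simp
      show "grad (x s) \<bullet> v s \<le> 0" if "\<tau> < s" "s < t" for s
      proof -
        have "0 \<le> ((1 - lam) * \<alpha> / s + \<beta> * \<mu>) * (norm (v s))\<^sup>2"
          using that tau_pos lam alpha_pos beta_nn mu_pos by simp
        moreover have "grad (x s) \<bullet> v s \<le> - ((1 - lam) * \<alpha> / s + \<beta> * \<mu>) * (norm (v s))\<^sup>2"
          using dbound[of s] that tau_pos by simp
        ultimately show ?thesis by (simp only: mult_minus_left)
      qed
    qed
  qed
  obtain ys where ys: "\<phi> ys = \<phi>star" using min_att by blast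
  have pl: "(norm g)\<^sup>2 \<ge> 2 * \<mu> * (\<phi> z - \<phi>star)"
    unfolding g_def by (rule PL[OF grad strong mu_pos ys])
  have "A * \<tau>\<^sup>2 * P \<ge> (2 * \<mu> * (\<phi> z - \<phi>star)) * Psi_fun \<alpha> \<beta> L \<tau> / (\<alpha> + 1)\<^sup>2 * \<tau>\<^sup>2 * P"
    unfolding A_def using pl P0 by (intro mult_right_mono divide_right_mono) (auto simp: Psi_fun_def)
  moreover have "(2 * \<mu> * (\<phi> z - \<phi>star)) * Psi_fun \<alpha> \<beta> L \<tau> / (\<alpha> + 1)\<^sup>2 * \<tau>\<^sup>2 * P
      = P * (2 * \<mu> * \<tau>\<^sup>2 * Psi_fun \<alpha> \<beta> L \<tau> / (\<alpha> + 1)\<^sup>2) * (\<phi> z - \<phi>star)"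
    by (simp add: algebra_simps)
  ultimately have "\<phi> (x t) - \<phi>star \<le> (\<phi> z - \<phi>star) - P * (2 * \<mu> * \<tau>\<^sup>2 * Psi_fun \<alpha> \<beta> L \<tau> / (\<alpha> + 1)\<^sup>2) * (\<phi> z - \<phi>star)"
    using ph1 ph2 by linarith
  then show ?thesis unfolding P_def by (simp add: algebra_simps)
qed


end
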